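(* Fix $\alpha>1$, a target model $\theta_0^*\in\Theta$ and a class $\hat\Theta_0^{\mathrm{u}}\subseteq\Theta$, let $\epsilon_0=\min_{\theta_0\in\hat\Theta_0^{\mathrm{u}}}\max_{\pi\in\Pi}\mathtt{D}_{\mathtt{R},\alpha}(\mathbb{P}^\pi_{\theta_0^*},\mathbb{P}^\pi_{\theta_0})$ and let $\theta_0^{\epsilon_0}\in\hat\Theta_0^{\mathrm{u}}$ attain this minimum. Consider trajectories $\tau_H^{t,h}\sim\mathbb{P}^{\nu_h^{\pi^t}}_{\theta_0^*}$ collected by OMLE, where each $\pi^t$ is chosen based on data from earlier iterations. Then with probability at least $1-\delta$, for every $k\in[K]$, \[\sum_{t<k}\sum_{h}\log\frac{\mathbb{P}^{\nu_h^{\pi^t}}_{\theta_0^*}(\tau_H^{t,h})}{\mathbb{P}^{\nu_h^{\pi^t}}_{\theta_0^{\epsilon_0}}(\tau_H^{t,h})}\le\epsilon_0KH+\frac{\mathbf{1}_{\{\epsilon_0\ne0\}}}{\alpha-1}\log\frac{K}{\delta}.\]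
   Context: Setting: finite $\mathcal{O},\mathcal{A}$, horizon $H$; trajectories $\tau_H=(o_1,a_1,\ldots,o_H,a_H)$; policies $\pi$ with $a_h\sim\pi_h(\cdot\mid\tau_{h-1},o_h)$, $\Pi$ the set of all policies; $\mathbb{P}^\pi_\theta$ is the trajectory law of model $\theta$ under $\pi$. $\Theta$ is the set of rank-$r$, $\gamma$-well-conditioned predictive state representations (PSRs); the target task has core action sequence sets $\mathcal{Q}_h^A\subset\mathcal{A}^{H-h}$. Rényi divergence of order $\alpha>1$: $\mathtt{D}_{\mathtt{R},\alpha}(\mathbb{P},\mathbb{Q})=\frac{1}{\alpha-1}\log\mathbb{E}_{\mathbb{P}}[(\mathrm{d}\mathbb{P}/\mathrm{d}\mathbb{Q})^{\alpha-1}]$. $\mathtt{D}_{\mathtt{TV}}(\mathbb{P},\mathbb{Q})=\sum_x|\mathbb{P}(x)-\mathbb{Q}(x)|$. OMLE data collection: at iteration $t\in[K]$, $\pi^t\in\arg\max_{\pi\in\Pi}\max_{\theta,\theta'\in\boldsymbol{\mathcal{B}}_t}\mathtt{D}_{\mathtt{TV}}(\mathbb{P}^\pi_\theta,\mathbb{P}^\pi_{\theta'})$ for a data-dependent confidence set $\boldsymbol{\mathcal{B}}_t\subseteq\hat\Theta_0^{\mathrm{u}}$, and for each $h\in[H]$ one trajectory $\tau_H^{t,h}$ is drawn from the target task using $\nu_h^{\pi^t}$, which follows $\pi^t$ for the first $h-1$ steps, takes a uniformly random action at step $h$, then plays a uniformly random core action sequence from $\mathcal{Q}_h^A$. *)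

theory Defs
  imports "HOL-Probability.Probability"
begin

type_synonym ('o,'a) traj = "('o \<times> 'a) list"

(* A (general sequential) model: law of the next observation o_{h+1} given tau_h.
   Every PSR theta induces such a kernel; P^pi_theta depends on theta only through it. *)
type_synonym ('o,'a) model = "('o,'a) traj \<Rightarrow> 'o pmf"

(* A policy: pi_h(. | tau_{h-1}, o_h); the step h is length tau_{h-1} + 1. *)
type_synonym ('o,'a) policy = "('o,'a) traj \<Rightarrow> 'o \<Rightarrow> 'a pmf"

primrec traj_pmf :: "('o,'a) model \<Rightarrow> ('o,'a) policy \<Rightarrow> nat \<Rightarrow> ('o,'a) traj pmf" where
  "traj_pmf \<theta> \<pi> 0 = return_pmf []"
| "traj_pmf \<theta> \<pi> (Suc n) =
     bind_pmf (traj_pmf \<theta> \<pi> n) (\<lambda>\<tau>. bind_pmf (\<theta> \<tau>) (\<lambda>ob.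
       bind_pmf (\<pi> \<tau> ob) (\<lambda>a. return_pmf (\<tau> @ [(ob, a)]))))"

definition renyi_div :: "real \<Rightarrow> 'x pmf \<Rightarrow> 'x pmf \<Rightarrow> ereal" where
  "renyi_div \<alpha> P Q =
     (if \<forall>x. pmf Q x = 0 \<longrightarrow> pmf P x = 0
      then ereal (1 / (\<alpha> - 1) *
             ln (\<Sum>x\<in>set_pmf P. pmf P x * (pmf P x / pmf Q x) powr (\<alpha> - 1)))
      else \<infinity>)"

(* nu_h^pi: follow pi for steps 1..h-1, uniform action at step h, then a uniformly random
   core action sequence q from Qs h (a set of lists of length H-h) for steps h+1..H.
   Written as a genuine (history-dependent) policy: at step h+j (j >= 1) the action is
   the j-th entry of q, where q is uniform over the core sequences consistent with the
   actions a_{h+1},...,a_{h+j-1} already played (this is exactly "draw q uniformly, play it"). *)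
definition nu_policy :: "(nat \<Rightarrow> 'a::finite list set) \<Rightarrow> nat \<Rightarrow> ('o,'a) policy \<Rightarrow> ('o,'a) policy" where
  "nu_policy Qs h \<pi> \<tau> ob =
     (let m = length \<tau> in
      if Suc m < h then \<pi> \<tau> ob
      else if Suc m = h then pmf_of_set UNIV
      else (let j = Suc m - h;
                S = {q \<in> Qs h. take (j - 1) q = map snd (drop h \<tau>)}
            in if S = {} then pmf_of_set UNIV
               else map_pmf (\<lambda>q. q ! (j - 1)) (pmf_of_set S)))"

primrec seq_pmf :: "'x pmf list \<Rightarrow> 'x list pmf" where
  "seq_pmf [] = return_pmf []"
| "seq_pmf (p # ps) = bind_pmf p (\<lambda>x. bind_pmf (seq_pmf ps) (\<lambda>xs. return_pmf (x # xs)))"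

(* The data D is a list whose (t-1)-th entry is the list
   [tau^{t,1}, ..., tau^{t,H}].  The policy pi^t = sel (data of iterations 1..t-1) is chosen
   adaptively from earlier data (OMLE's choice is one particular such rule sel); then
   tau^{t,h} ~ P^{nu_h^{pi^t}}_{theta*} independently for h = 1..H. *)
primrec collect :: "(('o,'a) traj list list \<Rightarrow> ('o,'a) policy) \<Rightarrow> ('o,'a) model
    \<Rightarrow> (nat \<Rightarrow> 'a::finite list set) \<Rightarrow> nat \<Rightarrow> nat \<Rightarrow> ('o,'a) traj list list pmf" where
  "collect sel \<theta> Qs H 0 = return_pmf []"
| "collect sel \<theta> Qs H (Suc t) =
     bind_pmf (collect sel \<theta> Qs H t) (\<lambda>D.
       bind_pmf (seq_pmf (map (\<lambda>h. traj_pmf \<theta> (nu_policy Qs h (sel D)) H) [1..<Suc H]))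
         (\<lambda>taus. return_pmf (D @ [taus])))"

end

theory Submission imports Defs begin

lemma g_strict:
  fixes \<beta> r :: real
  assumes "\<beta> > 0" "r > 0" "r \<noteq> 1"
  shows "1 + \<beta> < r powr \<beta> + \<beta> / r"
proof -
  define u where "u = ln r"
  have u0: "u \<noteq> 0" using assms by (simp add: u_def)
  have "r powr \<beta> = exp (\<beta> * u)" using assms by (simp add: powr_def u_def mult.commute)
  moreover have "1 + \<beta> * u \<le> exp (\<beta> * u)" by simp
  moreover have "\<beta> / r = \<beta> * exp (- u)" using assms by (simp add: u_def exp_minus field_simps)
  moreover have "1 - u < exp (- u)" using exp_minus_greater u0 by blast
  ultimately have "r powr \<beta> + \<beta> / r > 1 + \<beta> * u + \<beta> * (1 - u)"
    using assms(1) by (smt (verit) mult_strict_left_mono)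
  then show ?thesis by (simp add: algebra_simps)
qed

lemma g_ge:
  fixes \<beta> r :: real
  assumes "\<beta> > 0" "r > 0"
  shows "1 + \<beta> \<le> r powr \<beta> + \<beta> / r"
  using g_strict[OF assms] assms by (cases "r = 1") auto

lemma renyi_core:
  fixes \<beta> :: real and P Q :: "'x pmf"
  assumes b: "\<beta> > 0" and fin: "finite (set_pmf P)"
    and ac: "\<forall>x. pmf Q x = 0 \<longrightarrow> pmf P x = 0"
  defines "s \<equiv> (\<Sum>x\<in>set_pmf P. pmf P x * (pmf P x / pmf Q x) powr \<beta>)"
  shows "(\<Sum>x\<in>set_pmf P. pmf P x * ((pmf P x / pmf Q x) powr \<beta> + \<beta> / (pmf P x / pmf Q x) - (1 + \<beta>)))
          \<le> s - 1" and "1 \<le> s"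
proof -
  have pos: "x \<in> set_pmf P \<Longrightarrow> pmf P x > 0 \<and> pmf Q x > 0" for x
    using ac by (metis pmf_nonneg order_le_less set_pmf_iff)
  have sP: "(\<Sum>x\<in>set_pmf P. pmf P x) = 1" using fin by (simp add: sum_pmf_eq_1)
  have sQ: "(\<Sum>x\<in>set_pmf P. pmf Q x) \<le> 1"
    using fin measure_measure_pmf_finite[OF fin, of Q] measure_pmf.prob_le_1 by metis
  have "(\<Sum>x\<in>set_pmf P. pmf P x * ((pmf P x / pmf Q x) powr \<beta> + \<beta> / (pmf P x / pmf Q x) - (1 + \<beta>)))
      = (\<Sum>x\<in>set_pmf P. pmf P x * (pmf P x / pmf Q x) powr \<beta> + \<beta> * pmf Q x - (1 + \<beta>) * pmf P x)"
  proof (rule sum.cong[OF refl])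
    fix x assume "x \<in> set_pmf P"
    with pos have p: "pmf P x > 0" "pmf Q x > 0" by auto
    then show "pmf P x * ((pmf P x / pmf Q x) powr \<beta> + \<beta> / (pmf P x / pmf Q x) - (1 + \<beta>))
      = pmf P x * (pmf P x / pmf Q x) powr \<beta> + \<beta> * pmf Q x - (1 + \<beta>) * pmf P x"
      by (simp add: field_simps)
  qed
  also have "\<dots> = s + \<beta> * (\<Sum>x\<in>set_pmf P. pmf Q x) - (1 + \<beta>)"
    by (simp add: s_def sum.distrib sum_subtractf sum_distrib_left[symmetric] sP)
  also have "\<dots> \<le> s - 1" using sQ b by (smt (verit) mult_left_le)
  finally show 1: "(\<Sum>x\<in>set_pmf P. pmf P x * ((pmf P x / pmf Q x) powr \<beta> + \<beta> / (pmf P x / pmf Q x) - (1 + \<beta>)))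
          \<le> s - 1" .
  have "0 \<le> (\<Sum>x\<in>set_pmf P. pmf P x * ((pmf P x / pmf Q x) powr \<beta> + \<beta> / (pmf P x / pmf Q x) - (1 + \<beta>)))"
  proof (rule sum_nonneg)
    fix x assume "x \<in> set_pmf P"
    with pos have p: "pmf P x > 0" "pmf Q x > 0" by auto
    have "1 + \<beta> \<le> (pmf P x / pmf Q x) powr \<beta> + \<beta> / (pmf P x / pmf Q x)"
      by (rule g_ge[OF b]) (use p in simp)
    then show "0 \<le> pmf P x * ((pmf P x / pmf Q x) powr \<beta> + \<beta> / (pmf P x / pmf Q x) - (1 + \<beta>))"
      using p by simp
  qed
  with 1 show "1 \<le> s" by simp
qed

lemma renyi_nonneg:
  assumes a: "\<alpha> > 1"
  shows "0 \<le> renyi_div \<alpha> P Q"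
proof (cases "\<forall>x. pmf Q x = 0 \<longrightarrow> pmf P x = 0")
  case ac: True
  define s where "s = (\<Sum>x\<in>set_pmf P. pmf P x * (pmf P x / pmf Q x) powr (\<alpha> - 1))"
  have "0 \<le> ln s"
  proof (cases "finite (set_pmf P)")
    case True
    have "1 \<le> s" unfolding s_def by (rule renyi_core(2)) (use a True ac in auto)
    then show ?thesis by simp
  next
    case False
    then show ?thesis by (simp add: s_def)
  qed
  then show ?thesis using a ac by (simp add: renyi_div_def s_def[symmetric])
next
  case False
  then show ?thesis by (auto simp: renyi_div_def)
qed

lemma renyi_le0:
  assumes a: "\<alpha> > 1" and fin: "finite (set_pmf P)" and le: "renyi_div \<alpha> P Q \<le> 0"
    and x: "x \<in> set_pmf P"
  shows "pmf P x = pmf Q x"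
proof -
  have ac: "\<forall>x. pmf Q x = 0 \<longrightarrow> pmf P x = 0"
    using le by (auto simp: renyi_div_def split: if_splits)
  define s where "s = (\<Sum>x\<in>set_pmf P. pmf P x * (pmf P x / pmf Q x) powr (\<alpha> - 1))"
  have b: "\<alpha> - 1 > 0" using a by simp
  have s1: "1 \<le> s" unfolding s_def by (rule renyi_core(2)) (use a fin ac in auto)
  have "1 / (\<alpha> - 1) * ln s \<le> 0" using le ac by (simp add: renyi_div_def s_def)
  then have "ln s \<le> 0" using b by (simp add: divide_le_0_iff)
  then have "s \<le> 1" using s1 by simp
  define f where "f = (\<lambda>x. pmf P x * ((pmf P x / pmf Q x) powr (\<alpha> - 1) + (\<alpha> - 1) / (pmf P x / pmf Q x) - (1 + (\<alpha> - 1))))"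
  have pos: "y \<in> set_pmf P \<Longrightarrow> pmf P y > 0 \<and> pmf Q y > 0" for y
    using ac by (metis pmf_nonneg order_le_less set_pmf_iff)
  have fnn: "y \<in> set_pmf P \<Longrightarrow> 0 \<le> f y" for y
  proof -
    assume "y \<in> set_pmf P"
    with pos have p: "pmf P y > 0" "pmf Q y > 0" by auto
    have "1 + (\<alpha> - 1) \<le> (pmf P y / pmf Q y) powr (\<alpha> - 1) + (\<alpha> - 1) / (pmf P y / pmf Q y)"
      by (rule g_ge[OF b]) (use p in simp)
    then show "0 \<le> f y" using p by (simp add: f_def)
  qed
  have "sum f (set_pmf P) \<le> s - 1" unfolding f_def s_def by (rule renyi_core(1)) (use b fin ac in auto)
  with \<open>s \<le> 1\<close> have "sum f (set_pmf P) \<le> 0" by simp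
  moreover have "0 \<le> sum f (set_pmf P)" using fnn by (simp add: sum_nonneg)
  ultimately have "sum f (set_pmf P) = 0" by simp
  then have "f x = 0" using sum_nonneg_eq_0_iff[OF fin] fnn x by blast
  moreover have p: "pmf P x > 0" "pmf Q x > 0" using pos x by auto
  ultimately have eq: "(pmf P x / pmf Q x) powr (\<alpha> - 1) + (\<alpha> - 1) / (pmf P x / pmf Q x) = 1 + (\<alpha> - 1)"
    by (simp add: f_def)
  have "pmf P x / pmf Q x = 1"
  proof (rule ccontr)
    assume "pmf P x / pmf Q x \<noteq> 1"
    from g_strict[OF b _ this] p eq show False by simp
  qed
  then show ?thesis using p by simp
qed

lemma renyi_le_e:
  assumes a: "\<alpha> > 1" and fin: "finite (set_pmf P)" and le: "renyi_div \<alpha> P Q \<le> ereal e"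
  shows "(\<integral>\<^sup>+x. ennreal (exp ((\<alpha> - 1) * ln (pmf P x / pmf Q x))) \<partial>P) \<le> ennreal (exp ((\<alpha> - 1) * e))"
proof -
  have ac: "\<forall>x. pmf Q x = 0 \<longrightarrow> pmf P x = 0"
    using le by (auto simp: renyi_div_def split: if_splits)
  define s where "s = (\<Sum>x\<in>set_pmf P. pmf P x * (pmf P x / pmf Q x) powr (\<alpha> - 1))"
  have b: "\<alpha> - 1 > 0" using a by simp
  have s1: "1 \<le> s" unfolding s_def by (rule renyi_core(2)) (use a fin ac in auto)
  have "1 / (\<alpha> - 1) * ln s \<le> e" using le ac by (simp add: renyi_div_def s_def)
  then have "ln s \<le> (\<alpha> - 1) * e" using b by (simp add: field_simps)
  then have sle: "s \<le> exp ((\<alpha> - 1) * e)" using s1 by (metis exp_le_cancel_iff exp_ln less_le_trans zero_less_one)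
  have pos: "y \<in> set_pmf P \<Longrightarrow> pmf P y > 0 \<and> pmf Q y > 0" for y
    using ac by (metis pmf_nonneg order_le_less set_pmf_iff)
  have "(\<integral>\<^sup>+x. ennreal (exp ((\<alpha> - 1) * ln (pmf P x / pmf Q x))) \<partial>P)
      = (\<Sum>y\<in>set_pmf P. ennreal (exp ((\<alpha> - 1) * ln (pmf P y / pmf Q y))) * pmf P y)"
    by (rule nn_integral_measure_pmf_finite[OF fin]) auto
  also have "\<dots> = (\<Sum>y\<in>set_pmf P. ennreal (pmf P y * (pmf P y / pmf Q y) powr (\<alpha> - 1)))"
  proof (rule sum.cong[OF refl])
    fix y assume "y \<in> set_pmf P"
    with pos have p: "pmf P y > 0" "pmf Q y > 0" by auto
    then show "ennreal (exp ((\<alpha> - 1) * ln (pmf P y / pmf Q y))) * pmf P y =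
         ennreal (pmf P y * (pmf P y / pmf Q y) powr (\<alpha> - 1))"
      by (simp add: powr_def ennreal_mult' mult.commute)
  qed
  also have "\<dots> = ennreal s" unfolding s_def
    by (rule sum_ennreal) auto
  also have "\<dots> \<le> ennreal (exp ((\<alpha> - 1) * e))" using sle by simp
  finally show ?thesis .
qed


lemma traj_set: "set_pmf (traj_pmf \<theta> \<pi> n) \<subseteq> {xs. set xs \<subseteq> UNIV \<and> length xs = n}"
  by (induction n) auto

lemma traj_fin: "finite (set_pmf (traj_pmf (\<theta> :: ('o::finite,'a::finite) model) \<pi> n))"
  by (rule finite_subset[OF traj_set finite_lists_length_eq]) simp

lemma seq_set: "xs \<in> set_pmf (seq_pmf ps) \<Longrightarrow> length xs = length ps \<and> (\<forall>i<length ps. xs ! i \<in> set_pmf (ps ! i))"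
proof (induction ps arbitrary: xs)
  case Nil then show ?case by simp
next
  case (Cons p ps)
  then obtain x ys where "x \<in> set_pmf p" "ys \<in> set_pmf (seq_pmf ps)" "xs = x # ys" by auto
  with Cons.IH[of ys] show ?case by (auto simp: nth_Cons split: nat.splits)
qed

lemma seq_int:
  fixes f :: "nat \<Rightarrow> 'x \<Rightarrow> ennreal" and ps :: "'x pmf list"
  assumes "\<And>i. i < length ps \<Longrightarrow> (\<integral>\<^sup>+x. f i x \<partial>(ps ! i)) \<le> B"
  shows "(\<integral>\<^sup>+xs. (\<Prod>i<length ps. f i (xs ! i)) \<partial>seq_pmf ps) \<le> B ^ length ps"
  using assms
proof (induction ps arbitrary: f)
  case Nil then show ?case by simp
next
  case (Cons p ps)
  have IH: "(\<integral>\<^sup>+xs. (\<Prod>i<length ps. f (Suc i) (xs ! i)) \<partial>seq_pmf ps) \<le> B ^ length ps"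
    by (rule Cons.IH) (use Cons.prems in fastforce)
  have "(\<integral>\<^sup>+xs. (\<Prod>i<length (p # ps). f i (xs ! i)) \<partial>seq_pmf (p # ps))
      = (\<integral>\<^sup>+x. \<integral>\<^sup>+xs. f 0 x * (\<Prod>i<length ps. f (Suc i) (xs ! i)) \<partial>seq_pmf ps \<partial>p)"
    by (simp del: prod.lessThan_Suc add: prod.lessThan_Suc_shift)
  also have "\<dots> = (\<integral>\<^sup>+x. f 0 x * \<integral>\<^sup>+xs. (\<Prod>i<length ps. f (Suc i) (xs ! i)) \<partial>seq_pmf ps \<partial>p)"
    by (simp add: nn_integral_cmult)
  also have "\<dots> \<le> (\<integral>\<^sup>+x. f 0 x * B ^ length ps \<partial>p)"
    by (rule nn_integral_mono) (use IH in \<open>simp add: mult_left_mono\<close>)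
  also have "\<dots> = (\<integral>\<^sup>+x. f 0 x \<partial>p) * B ^ length ps"
    by (simp add: nn_integral_multc)
  also have "\<dots> \<le> B * B ^ length ps"
    using Cons.prems[of 0] by (simp add: mult_right_mono)
  finally show ?case by simp
qed

lemma collect_set:
  "D \<in> set_pmf (collect sel \<theta> Qs H n) \<Longrightarrow> length D = n \<and>
     (\<forall>t<n. length (D ! t) = H \<and>
        (\<forall>i<H. D ! t ! i \<in> set_pmf (traj_pmf \<theta> (nu_policy Qs (Suc i) (sel (take t D))) H)))"
proof (induction n arbitrary: D)
  case 0 then show ?case by simp
next
  case (Suc n)
  then obtain D0 taus where D0: "D0 \<in> set_pmf (collect sel \<theta> Qs H n)"
    and taus: "taus \<in> set_pmf (seq_pmf (map (\<lambda>h. traj_pmf \<theta> (nu_policy Qs h (sel D0)) H) [1..<Suc H]))"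
    and D: "D = D0 @ [taus]" by auto
  from Suc.IH[OF D0] have I: "length D0 = n" "\<forall>t<n. length (D0 ! t) = H \<and>
        (\<forall>i<H. D0 ! t ! i \<in> set_pmf (traj_pmf \<theta> (nu_policy Qs (Suc i) (sel (take t D0))) H))" by auto
  from seq_set[OF taus] have T: "length taus = H" "\<forall>i<H. taus ! i \<in> set_pmf (traj_pmf \<theta> (nu_policy Qs (Suc i) (sel D0)) H)"
    by (auto simp del: upt_Suc simp: nth_upt)
  show ?case
  proof (intro conjI allI impI)
    show "length D = Suc n" using D I by simp
  next
    fix t assume t: "t < Suc n"
    show "length (D ! t) = H" using D I T t by (cases "t < n") (auto simp: nth_append)
  next
    fix t i assume t: "t < Suc n" and i: "i < H"
    show "D ! t ! i \<in> set_pmf (traj_pmf \<theta> (nu_policy Qs (Suc i) (sel (take t D))) H)"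
    proof (cases "t < n")
      case True then show ?thesis using D I i by (auto simp: nth_append)
    next
      case False
      then have "t = n" using t by simp
      then show ?thesis using D I T i by (auto simp: nth_append)
    qed
  qed
qed

lemma collect_take:
  "m \<le> n \<Longrightarrow> map_pmf (take m) (collect sel \<theta> Qs H n) = collect sel \<theta> Qs H m"
proof (induction n)
  case 0 then show ?case by simp
next
  case (Suc n)
  show ?case
  proof (cases "m = Suc n")
    case True
    have "map_pmf (take m) (collect sel \<theta> Qs H (Suc n)) = map_pmf id (collect sel \<theta> Qs H (Suc n))"
      by (rule map_pmf_cong[OF refl]) (use True collect_set in fastforce)
    then show ?thesis using True by (simp add: pmf.map_id)
  next
    case False
    then have m: "m \<le> n" using Suc.prems by simp
    have "map_pmf (take m) (collect sel \<theta> Qs H (Suc n))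
        = bind_pmf (collect sel \<theta> Qs H n) (\<lambda>D. return_pmf (take m D))"
      unfolding collect.simps map_bind_pmf
      apply (rule bind_pmf_cong[OF refl])
      subgoal for D
        using collect_set[of D sel \<theta> Qs H n] m by (simp add: map_return_pmf)
      done
    also have "\<dots> = map_pmf (take m) (collect sel \<theta> Qs H n)" by (simp add: map_pmf_def)
    finally show ?thesis using Suc.IH[OF m] by simp
  qed
qed


definition LL :: "(('o,'a) traj list list \<Rightarrow> ('o,'a) policy) \<Rightarrow> ('o,'a) model \<Rightarrow> ('o,'a) model
   \<Rightarrow> (nat \<Rightarrow> 'a::finite list set) \<Rightarrow> nat \<Rightarrow> ('o,'a) traj list list \<Rightarrow> nat \<Rightarrow> real" where
  "LL sel \<theta>s \<theta>e Qs H D t = (\<Sum>h\<in>{1..H}.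
      ln (pmf (traj_pmf \<theta>s (nu_policy Qs h (sel (take (t - 1) D))) H) (D ! (t - 1) ! (h - 1))
        / pmf (traj_pmf \<theta>e (nu_policy Qs h (sel (take (t - 1) D))) H) (D ! (t - 1) ! (h - 1))))"

lemma LL_append:
  assumes "length D = n" "1 \<le> t" "t \<le> n"
  shows "LL sel \<theta>s \<theta>e Qs H (D @ [x]) t = LL sel \<theta>s \<theta>e Qs H D t"
  using assms unfolding LL_def by (simp add: nth_append)

lemma LL_last:
  assumes "length D = n"
  shows "LL sel \<theta>s \<theta>e Qs H (D @ [x]) (Suc n) = (\<Sum>i<H.
      ln (pmf (traj_pmf \<theta>s (nu_policy Qs (Suc i) (sel D)) H) (x ! i)
        / pmf (traj_pmf \<theta>e (nu_policy Qs (Suc i) (sel D)) H) (x ! i)))"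
  using assms unfolding LL_def by (simp add: sum.atLeast1_atMost_eq[simplified] nth_append)

lemma LL_take:
  assumes "1 \<le> t" "t \<le> m"
  shows "LL sel \<theta>s \<theta>e Qs H (take m D) t = LL sel \<theta>s \<theta>e Qs H D t"
  using assms unfolding LL_def by (simp add: min_def)

lemma moment:
  fixes \<beta> B :: real
  assumes b: "\<beta> > 0"
    and hyp: "\<And>\<pi>. (\<integral>\<^sup>+x. ennreal (exp (\<beta> * ln (pmf (traj_pmf \<theta>s \<pi> H) x / pmf (traj_pmf \<theta>e \<pi> H) x)))
               \<partial>traj_pmf \<theta>s \<pi> H) \<le> ennreal B"
  shows "(\<integral>\<^sup>+D. ennreal (exp (\<beta> * (\<Sum>t\<in>{1..<Suc n}. LL sel \<theta>s \<theta>e Qs H D t))) \<partial>collect sel \<theta>s Qs H n)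
          \<le> ennreal B ^ (n * H)"
proof (induction n)
  case 0 then show ?case by simp
next
  case (Suc n)
  define lr where "lr = (\<lambda>\<pi> x. ln (pmf (traj_pmf \<theta>s \<pi> H) x / pmf (traj_pmf \<theta>e \<pi> H) x))"
  define S where "S = (\<lambda>D. \<Sum>t\<in>{1..<Suc n}. LL sel \<theta>s \<theta>e Qs H D t)"
  define ps where "ps = (\<lambda>D. map (\<lambda>h. traj_pmf \<theta>s (nu_policy Qs h (sel D)) H) [1..<Suc H])"
  have lps: "length (ps D) = H" for D by (simp add: ps_def)
  have psi: "i < H \<Longrightarrow> ps D ! i = traj_pmf \<theta>s (nu_policy Qs (Suc i) (sel D)) H" for D i
    by (simp add: ps_def nth_upt del: upt_Suc)
  have split: "ennreal (exp (\<beta> * (\<Sum>t\<in>{1..<Suc (Suc n)}. LL sel \<theta>s \<theta>e Qs H (D @ [x]) t)))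
      = ennreal (exp (\<beta> * S D)) * (\<Prod>i<length (ps D). ennreal (exp (\<beta> * lr (nu_policy Qs (Suc i) (sel D)) (x ! i))))"
    if "length D = n" for D x
  proof -
    have "(\<Sum>t\<in>{1..<Suc (Suc n)}. LL sel \<theta>s \<theta>e Qs H (D @ [x]) t)
        = (\<Sum>t\<in>{1..<Suc n}. LL sel \<theta>s \<theta>e Qs H (D @ [x]) t) + LL sel \<theta>s \<theta>e Qs H (D @ [x]) (Suc n)"
      by (simp add: sum.atLeastLessThan_Suc)
    also have "\<dots> = S D + (\<Sum>i<H. lr (nu_policy Qs (Suc i) (sel D)) (x ! i))"
      unfolding S_def lr_def LL_last[OF that]
      by (intro arg_cong2[where f="(+)"] sum.cong refl LL_append[OF that]) auto
    finally have "exp (\<beta> * (\<Sum>t\<in>{1..<Suc (Suc n)}. LL sel \<theta>s \<theta>e Qs H (D @ [x]) t))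
       = exp (\<beta> * S D) * (\<Prod>i<H. exp (\<beta> * lr (nu_policy Qs (Suc i) (sel D)) (x ! i)))"
      by (simp add: distrib_left exp_add sum_distrib_left exp_sum)
    then show ?thesis by (simp add: lps prod_ennreal ennreal_mult')
  qed
  have "(\<integral>\<^sup>+D. ennreal (exp (\<beta> * (\<Sum>t\<in>{1..<Suc (Suc n)}. LL sel \<theta>s \<theta>e Qs H D t))) \<partial>collect sel \<theta>s Qs H (Suc n))
     = (\<integral>\<^sup>+D. \<integral>\<^sup>+x. ennreal (exp (\<beta> * (\<Sum>t\<in>{1..<Suc (Suc n)}. LL sel \<theta>s \<theta>e Qs H (D @ [x]) t))) \<partial>seq_pmf (ps D) \<partial>collect sel \<theta>s Qs H n)"
    by (simp add: ps_def del: upt_Suc)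
  also have "\<dots> = (\<integral>\<^sup>+D. ennreal (exp (\<beta> * S D)) * \<integral>\<^sup>+x. (\<Prod>i<length (ps D). ennreal (exp (\<beta> * lr (nu_policy Qs (Suc i) (sel D)) (x ! i)))) \<partial>seq_pmf (ps D) \<partial>collect sel \<theta>s Qs H n)"
    apply (rule nn_integral_cong_AE)
    apply (simp add: AE_measure_pmf_iff)
    apply (intro ballI)
    subgoal for D
      using collect_set[of D sel \<theta>s Qs H n] split[of D] by (simp add: nn_integral_cmult)
    done
  also have "\<dots> \<le> (\<integral>\<^sup>+D. ennreal (exp (\<beta> * S D)) * ennreal B ^ H \<partial>collect sel \<theta>s Qs H n)"
  proof (rule nn_integral_mono)
    fix D
    have "(\<integral>\<^sup>+x. (\<Prod>i<length (ps D). ennreal (exp (\<beta> * lr (nu_policy Qs (Suc i) (sel D)) (x ! i)))) \<partial>seq_pmf (ps D))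
        \<le> ennreal B ^ length (ps D)"
      by (rule seq_int) (simp add: lps psi lr_def hyp)
    then show "ennreal (exp (\<beta> * S D)) * (\<integral>\<^sup>+x. (\<Prod>i<length (ps D). ennreal (exp (\<beta> * lr (nu_policy Qs (Suc i) (sel D)) (x ! i)))) \<partial>seq_pmf (ps D))
        \<le> ennreal (exp (\<beta> * S D)) * ennreal B ^ H"
      by (simp add: lps mult_left_mono)
  qed
  also have "\<dots> = (\<integral>\<^sup>+D. ennreal (exp (\<beta> * S D)) \<partial>collect sel \<theta>s Qs H n) * ennreal B ^ H"
    by (simp add: nn_integral_multc)
  also have "\<dots> \<le> ennreal B ^ (n * H) * ennreal B ^ H"
    using Suc.IH by (simp add: S_def mult_right_mono)
  also have "\<dots> = ennreal B ^ (Suc n * H)" by (simp add: power_add mult.commute)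
  finally show ?case .
qed


lemma markov_pmf:
  fixes S :: "'x \<Rightarrow> real" and M :: "'x pmf"
  assumes b: "\<beta> > 0" and I: "(\<integral>\<^sup>+x. ennreal (exp (\<beta> * S x)) \<partial>M) \<le> ennreal Bd" and Bd: "Bd \<ge> 0"
  shows "measure_pmf.prob M {x. c < S x} \<le> Bd / exp (\<beta> * c)"
proof -
  let ?X = "{x. c < S x}"
  have "(\<integral>\<^sup>+x. ennreal (exp (\<beta> * c)) * indicator ?X x \<partial>M) \<le> (\<integral>\<^sup>+x. ennreal (exp (\<beta> * S x)) \<partial>M)"
    by (rule nn_integral_mono) (use b in \<open>auto simp: indicator_def\<close>)
  also have "\<dots> \<le> ennreal Bd" by (rule I)
  finally have "ennreal (exp (\<beta> * c)) * emeasure M ?X \<le> ennreal Bd"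
    by (simp add: nn_integral_cmult_indicator)
  then have "ennreal (exp (\<beta> * c) * measure_pmf.prob M ?X) \<le> ennreal Bd"
    by (simp add: measure_pmf.emeasure_eq_measure ennreal_mult')
  then have "exp (\<beta> * c) * measure_pmf.prob M ?X \<le> Bd" using Bd by simp
  then show ?thesis by (simp add: field_simps mult.commute)
qed


theorem lemma4:
  fixes \<alpha> \<delta> :: real and K H :: nat
    and \<Theta> \<Theta>u :: "('o::finite, 'a::finite) model set"
    and \<theta>star \<theta>eps :: "('o, 'a) model"
    and Qs :: "nat \<Rightarrow> 'a list set"
    and sel :: "('o, 'a) traj list list \<Rightarrow> ('o, 'a) policy"
    and \<epsilon>0 :: ereal
  assumes alpha: "\<alpha> > 1"
    and delta: "0 < \<delta>" "\<delta> < 1"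
    and target: "\<theta>star \<in> \<Theta>"
    and cls: "\<Theta>u \<subseteq> \<Theta>"
    and core: "\<And>h. h \<in> {1..H} \<Longrightarrow> finite (Qs h) \<and> Qs h \<noteq> {} \<and> (\<forall>q\<in>Qs h. length q = H - h)"
    and eps_mem: "\<theta>eps \<in> \<Theta>u"
    and eps_min: "\<And>\<theta>0. \<theta>0 \<in> \<Theta>u \<Longrightarrow>
        (SUP \<pi>. renyi_div \<alpha> (traj_pmf \<theta>star \<pi> H) (traj_pmf \<theta>eps \<pi> H))
          \<le> (SUP \<pi>. renyi_div \<alpha> (traj_pmf \<theta>star \<pi> H) (traj_pmf \<theta>0 \<pi> H))"
    and eps_def: "\<epsilon>0 = (SUP \<pi>. renyi_div \<alpha> (traj_pmf \<theta>star \<pi> H) (traj_pmf \<theta>eps \<pi> H))"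
  shows "measure_pmf.prob (collect sel \<theta>star Qs H K)
     {D. \<forall>k\<in>{1..K}.
        ereal (\<Sum>t\<in>{1..<k}. \<Sum>h\<in>{1..H}.
            ln (pmf (traj_pmf \<theta>star (nu_policy Qs h (sel (take (t - 1) D))) H) (D ! (t - 1) ! (h - 1))
              / pmf (traj_pmf \<theta>eps (nu_policy Qs h (sel (take (t - 1) D))) H) (D ! (t - 1) ! (h - 1))))
        \<le> \<epsilon>0 * ereal (real K * real H)
           + (if \<epsilon>0 \<noteq> 0 then ereal (1 / (\<alpha> - 1) * ln (real K / \<delta>)) else 0)}
     \<ge> 1 - \<delta>"
proof -
  define M where "M = collect sel \<theta>star Qs H K"
  define R where "R = \<epsilon>0 * ereal (real K * real H)
           + (if \<epsilon>0 \<noteq> 0 then ereal (1 / (\<alpha> - 1) * ln (real K / \<delta>)) else 0)"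
  define S where "S = (\<lambda>k D. \<Sum>t\<in>{1..<k}. LL sel \<theta>star \<theta>eps Qs H D t)"
  define A where "A = {D. \<forall>k\<in>{1..K}. ereal (S k D) \<le> R}"
  have setA: "{D. \<forall>k\<in>{1..K}.
        ereal (\<Sum>t\<in>{1..<k}. \<Sum>h\<in>{1..H}.
            ln (pmf (traj_pmf \<theta>star (nu_policy Qs h (sel (take (t - 1) D))) H) (D ! (t - 1) ! (h - 1))
              / pmf (traj_pmf \<theta>eps (nu_policy Qs h (sel (take (t - 1) D))) H) (D ! (t - 1) ! (h - 1))))
        \<le> R} = A"
    by (simp add: A_def S_def LL_def)
  have b: "\<alpha> - 1 > 0" using alpha by simp
  have rle: "renyi_div \<alpha> (traj_pmf \<theta>star \<pi> H) (traj_pmf \<theta>eps \<pi> H) \<le> \<epsilon>0" for \<pi>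
    unfolding eps_def by (rule SUP_upper) simp
  have e0: "0 \<le> \<epsilon>0" using rle[of undefined] renyi_nonneg[OF alpha] order_trans by blast
  have "1 - \<delta> \<le> measure_pmf.prob M A"
  proof (cases "\<epsilon>0 = 0")
    case True
    have "\<forall>D\<in>set_pmf M. D \<in> A"
    proof
      fix D assume D: "D \<in> set_pmf M"
      have "S k D = 0" if k: "k \<in> {1..K}" for k
        unfolding S_def
      proof (rule sum.neutral, rule ballI)
        fix t assume t: "t \<in> {1..<k}"
        show "LL sel \<theta>star \<theta>eps Qs H D t = 0" unfolding LL_def
        proof (rule sum.neutral, rule ballI)
          fix h assume h: "h \<in> {1..H}"
          let ?P = "traj_pmf \<theta>star (nu_policy Qs h (sel (take (t - 1) D))) H"
          let ?Q = "traj_pmf \<theta>eps (nu_policy Qs h (sel (take (t - 1) D))) H"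
          have cs: "\<forall>t<K. \<forall>i<H. D ! t ! i \<in> set_pmf (traj_pmf \<theta>star (nu_policy Qs (Suc i) (sel (take t D))) H)"
            using collect_set[of D sel \<theta>star Qs H K] D by (auto simp: M_def)
          have "t - 1 < K" "h - 1 < H" using t h k by auto
          with cs have "D ! (t - 1) ! (h - 1) \<in> set_pmf (traj_pmf \<theta>star (nu_policy Qs (Suc (h - 1)) (sel (take (t - 1) D))) H)"
            by blast
          then have x: "D ! (t - 1) ! (h - 1) \<in> set_pmf ?P" using h by simp
          have "pmf ?P (D ! (t - 1) ! (h - 1)) = pmf ?Q (D ! (t - 1) ! (h - 1))"
            by (rule renyi_le0[OF alpha traj_fin _ x]) (use rle True in metis)
          moreover have "pmf ?P (D ! (t - 1) ! (h - 1)) > 0" using x by (simp add: set_pmf_iff order_le_less)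
          ultimately show "ln (pmf ?P (D ! (t - 1) ! (h - 1)) / pmf ?Q (D ! (t - 1) ! (h - 1))) = 0" by simp
        qed
      qed
      then show "D \<in> A" using True by (simp add: A_def R_def)
    qed
    then have "measure_pmf.prob M A = 1"
      by (simp add: measure_pmf.prob_eq_1 AE_measure_pmf_iff)
    then show ?thesis using delta by simp
  next
    case nz: False
    show ?thesis
    proof (cases "\<epsilon>0 = \<infinity>")
      case True
      have "A = UNIV"
      proof -
        have "ereal (S k D) \<le> R" if k: "k \<in> {1..K}" for k D
        proof (cases "H = 0")
          case True
          have "ln (real K / \<delta>) \<ge> 0" using k delta by simp
          moreover have eq: "\<epsilon>0 * ereal (real K * real H) = 0" using True
            by (simp add: zero_ereal_def[symmetric])
          moreover have "S k D = 0" using True by (simp add: S_def LL_def)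
          moreover have "R = ereal (1 / (\<alpha> - 1) * ln (real K / \<delta>))"
            unfolding R_def eq using nz by simp
          ultimately show ?thesis using b by simp
        next
          case False
          then have "R = \<infinity>" using k True by (simp add: R_def)
          then show ?thesis by simp
        qed
        then show ?thesis by (auto simp: A_def)
      qed
      then show ?thesis using delta by simp
    next
      case False
      then obtain e where e: "\<epsilon>0 = ereal e" "e > 0" using nz e0
        by (cases \<epsilon>0) auto
      define c where "c = e * (real K * real H) + 1 / (\<alpha> - 1) * ln (real K / \<delta>)"
      have Rc: "R = ereal c" using e by (simp add: R_def c_def)
      define B where "B = exp ((\<alpha> - 1) * e)"
      have hyp: "(\<integral>\<^sup>+x. ennreal (exp ((\<alpha> - 1) * ln (pmf (traj_pmf \<theta>star \<pi> H) x / pmf (traj_pmf \<theta>eps \<pi> H) x)))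
               \<partial>traj_pmf \<theta>star \<pi> H) \<le> ennreal B" for \<pi>
        unfolding B_def by (rule renyi_le_e[OF alpha traj_fin]) (use rle e in metis)
      have pk: "measure_pmf.prob M {D. c < S k D} \<le> \<delta> / K" if k: "k \<in> {1..K}" for k
      proof -
        have Kpos: "real K > 0" using k by simp
        have "S k (take (k - 1) D) = S k D" for D
          unfolding S_def by (rule sum.cong[OF refl], rule LL_take) auto
        then have "{D. c < S k D} = take (k - 1) -` {D. c < S k D}" by auto
        then have "measure_pmf.prob M {D. c < S k D} = measure_pmf.prob (map_pmf (take (k - 1)) M) {D. c < S k D}"
          by (simp add: measure_map_pmf)
        also have "\<dots> = measure_pmf.prob (collect sel \<theta>star Qs H (k - 1)) {D. c < S k D}"
          unfolding M_def using k by (subst collect_take) auto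
        also have "\<dots> \<le> B ^ ((k - 1) * H) / exp ((\<alpha> - 1) * c)"
        proof (rule markov_pmf[OF b])
          have "S k = (\<lambda>D. \<Sum>t\<in>{1..<Suc (k - 1)}. LL sel \<theta>star \<theta>eps Qs H D t)"
            using k by (simp add: S_def)
          then show "(\<integral>\<^sup>+x. ennreal (exp ((\<alpha> - 1) * S k x)) \<partial>collect sel \<theta>star Qs H (k - 1)) \<le> ennreal (B ^ ((k - 1) * H))"
            using moment[OF b hyp, where n="k - 1" and sel=sel and Qs=Qs] by (simp add: B_def ennreal_power)
          show "0 \<le> B ^ ((k - 1) * H)" by (simp add: B_def)
        qed
        also have "\<dots> = exp ((\<alpha> - 1) * e * real ((k - 1) * H) - (\<alpha> - 1) * c)"
          by (simp add: B_def exp_diff exp_of_nat_mult[symmetric] mult_ac)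
        also have "\<dots> \<le> exp (- ln (real K / \<delta>))"
        proof -
          have "real ((k - 1) * H) \<le> real K * real H" using k by (simp add: mult_right_mono)
          then have "(\<alpha> - 1) * e * real ((k - 1) * H) \<le> (\<alpha> - 1) * e * (real K * real H)"
            using b e by (intro mult_left_mono) auto
          moreover have "(\<alpha> - 1) * c = (\<alpha> - 1) * e * (real K * real H) + ln (real K / \<delta>)"
            using b by (simp add: c_def field_simps)
          ultimately show ?thesis by simp
        qed
        also have "\<dots> = \<delta> / K" using Kpos delta by (simp add: exp_minus exp_ln)
        finally show ?thesis .
      qed
      have "UNIV - A = (\<Union>k\<in>{1..K}. {D. c < S k D})" by (auto simp: A_def Rc)
      then have "measure_pmf.prob M (UNIV - A) \<le> (\<Sum>k\<in>{1..K}. measure_pmf.prob M {D. c < S k D})"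
        by (simp add: measure_pmf.finite_measure_subadditive_finite)
      also have "\<dots> \<le> (\<Sum>k\<in>{1..K}. \<delta> / K)" by (rule sum_mono) (rule pk)
      also have "\<dots> \<le> \<delta>" using delta by simp
      finally have "measure_pmf.prob M (UNIV - A) \<le> \<delta>" .
      moreover have "measure_pmf.prob M (UNIV - A) = 1 - measure_pmf.prob M A"
        using measure_pmf.prob_compl[of A M] by simp
      ultimately show ?thesis by simp
    qed
  qed
  then show ?thesis unfolding M_def R_def[symmetric] setA .
qed

end
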